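(* Let $\mathcal{X}=\mathbb{T}^d$, consider the diffusion $dX_t=b(X_t)\,dt+dW_t$ with $b\in C^\infty(\mathbb{T}^d)$, let $f\in C^\infty(\mathbb{T}^d)$, and let $Q^f_{\Delta t}$ be a consistent discretization of the associated Feynman–Kac semigroup satisfying Assumption 6. Then there exists $\Delta t^{**}>0$ such that for every $\Delta t\in(0,\Delta t^{**}]$ the discrete Feynman–Kac dynamics $\Phi_k(\mu)(\varphi)=\mu((Q^f_{\Delta t})^k\varphi)/\mu((Q^f_{\Delta t})^k\mathbb{1})$ admits a unique invariant probability measure $\mu^*_{f,\Delta t}$ (fixed point of $\Phi_1$), and there exist $\kappa>0$, $C>0$ (independent of $\Delta t$) such that for every bounded measurable $\varphi$, every probability measure $\mu$ on $\mathbb{T}^d$ and every $\Delta t\in(0,\Delta t^{**}]$, $$\forall\,k\geq0,\quad \big|\Phi_k(\mu)(\varphi)-\mu^*_{f,\Delta t}(\varphi)\big|\leq Ce^{-\kappa k\Delta t}\|\varphi\|_{L^\infty}.$$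
   Context: Generator $\mathcal{L}=b\cdot\nabla+\frac12\Delta$. $\lceil a\rceil$ is the upper integer part; $\mathbb{1}$ is the constant function $1$; $\Phi_0(\mu)=\mu$. Consistent discretization: a kernel operator $Q^f_{\Delta t}$ (depending on a time step $\Delta t>0$) such that for every bounded measurable $\varphi$, $Q^f_{\Delta t}\varphi$ is continuous (strong Feller), and there exist $\Delta t^*>0$, $C>0$, $p\in\mathbb{N}$ and operators $\mathcal{R}_{\Delta t}:C^\infty(\mathbb{T}^d)\to C^\infty(\mathbb{T}^d)$ such that for all $\varphi\in C^\infty$, $Q^f_{\Delta t}\varphi=\varphi+\Delta t(\mathcal{L}+f)\varphi+\Delta t^2\mathcal{R}_{\Delta t}\varphi$ with $\|\mathcal{R}_{\Delta t}\varphi\|_{L^\infty}\leq C\sup_{|m|\leq p}\|\partial^m\varphi\|_{L^\infty}$ for all $\Delta t\in(0,\Delta t^*]$. Assumption 6 (uniform minorization and boundedness): for a fixed $T>0$ there exist $\Delta t^*>0$, a probability measure $\eta$ on $\mathbb{T}^d$ and $\alpha\in(0,1)$ such that for every $\Delta t\in(0,\Delta t^*]$, $Q^f_{\Delta t}$ is strong Feller and for every bounded measurable $\varphi\geq0$ and all $x$: $\alpha\eta(\varphi)\leq\big((Q^f_{\Delta t})^{\lceil T/\Delta t\rceil}\varphi\big)(x)\leq\alpha^{-1}\eta(\varphi)$. *)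

theory Defs
  imports "HOL-Analysis.Analysis" "HOL-Probability.Probability"
begin

text \<open>The torus T^d is represented by R^d (type real^'d) modulo Z^d: functions on
  T^d are Z^d-periodic functions on R^d, measures on T^d are measures on R^d
  concentrated on the fundamental cube [0,1)^d.\<close>

definition periodic :: "(real^'d \<Rightarrow> 'b) \<Rightarrow> bool" where
  "periodic g \<longleftrightarrow> (\<forall>x i. g (x + axis i 1) = g x)"

definition cube :: "(real^'d::finite) set" where
  "cube = {x. \<forall>i. 0 \<le> x $ i \<and> x $ i < 1}"

definition pd :: "'d::finite \<Rightarrow> (real^'d \<Rightarrow> real) \<Rightarrow> real^'d \<Rightarrow> real" where
  "pd i g x = deriv (\<lambda>t. g (x + t *\<^sub>R axis i 1)) 0"

fun pdm :: "'d::finite list \<Rightarrow> (real^'d \<Rightarrow> real) \<Rightarrow> real^'d \<Rightarrow> real" where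
  "pdm [] g = g"
| "pdm (i # ms) g = pd i (pdm ms g)"

definition smooth :: "(real^'d::finite \<Rightarrow> real) \<Rightarrow> bool" where
  "smooth g \<longleftrightarrow> (\<forall>ms. continuous_on UNIV (pdm ms g) \<and>
      (\<forall>i x. (\<lambda>t. pdm ms g (x + t *\<^sub>R axis i 1)) differentiable (at 0)))"

definition smooth_torus :: "(real^'d::finite \<Rightarrow> real) \<Rightarrow> bool" where
  "smooth_torus g \<longleftrightarrow> smooth g \<and> periodic g"

definition bmeas_torus :: "(real^'d::finite \<Rightarrow> real) \<Rightarrow> bool" where
  "bmeas_torus g \<longleftrightarrow> periodic g \<and> g \<in> borel_measurable borel \<and> bounded (range g)"

text \<open>Sup norm (the L^infinity norm of the statement, taken pointwise).\<close>
definition supnorm :: "(real^'d::finite \<Rightarrow> real) \<Rightarrow> real" where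
  "supnorm g = (SUP x. \<bar>g x\<bar>)"

definition torus_prob :: "(real^'d::finite) measure \<Rightarrow> bool" where
  "torus_prob \<mu> \<longleftrightarrow> prob_space \<mu> \<and> sets \<mu> = sets borel \<and> emeasure \<mu> cube = 1"

definition gen :: "(real^'d::finite \<Rightarrow> real^'d) \<Rightarrow> (real^'d \<Rightarrow> real) \<Rightarrow> real^'d \<Rightarrow> real" where
  "gen b g x = (\<Sum>i\<in>UNIV. b x $ i * pd i g x) + (1/2) * (\<Sum>i\<in>UNIV. pd i (pd i g) x)"

definition Qop :: "(real \<Rightarrow> real^'d::finite \<Rightarrow> (real^'d) measure) \<Rightarrow> real
    \<Rightarrow> (real^'d \<Rightarrow> real) \<Rightarrow> real^'d \<Rightarrow> real" where
  "Qop K dt g x = integral\<^sup>L (K dt x) g"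

definition kernel_torus :: "(real \<Rightarrow> real^'d::finite \<Rightarrow> (real^'d) measure) \<Rightarrow> bool" where
  "kernel_torus K \<longleftrightarrow> (\<forall>dt>0. \<forall>x.
      finite_measure (K dt x) \<and> sets (K dt x) = sets borel \<and>
      emeasure (K dt x) (UNIV - cube) = 0 \<and>
      (\<forall>i. K dt (x + axis i 1) = K dt x))"

definition strong_feller :: "(real \<Rightarrow> real^'d::finite \<Rightarrow> (real^'d) measure) \<Rightarrow> real \<Rightarrow> bool" where
  "strong_feller K dt \<longleftrightarrow> (\<forall>g. bmeas_torus g \<longrightarrow> continuous_on UNIV (Qop K dt g))"

definition consistent_discretization ::
  "(real^'d::finite \<Rightarrow> real^'d) \<Rightarrow> (real^'d \<Rightarrow> real) \<Rightarrow> (real \<Rightarrow> real^'d \<Rightarrow> (real^'d) measure) \<Rightarrow> bool" where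
  "consistent_discretization b f K \<longleftrightarrow>
     kernel_torus K \<and> (\<forall>dt>0. strong_feller K dt) \<and>
     (\<exists>dtstar>0. \<exists>C>0. \<exists>p::nat. \<exists>R :: real \<Rightarrow> (real^'d \<Rightarrow> real) \<Rightarrow> (real^'d \<Rightarrow> real).
        \<forall>dt. 0 < dt \<and> dt \<le> dtstar \<longrightarrow> (\<forall>g. smooth_torus g \<longrightarrow>
          smooth_torus (R dt g) \<and>
          (\<forall>x. Qop K dt g x = g x + dt * (gen b g x + f x * g x) + dt\<^sup>2 * R dt g x) \<and>
          supnorm (R dt g) \<le> C * Sup {supnorm (pdm ms g) | ms. length ms \<le> p}))"

definition assumption6 :: "(real \<Rightarrow> real^'d::finite \<Rightarrow> (real^'d) measure) \<Rightarrow> real \<Rightarrow> bool" where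
  "assumption6 K T \<longleftrightarrow>
     (\<exists>dtstar>0. \<exists>\<eta>. torus_prob \<eta> \<and> (\<exists>\<alpha>. 0 < \<alpha> \<and> \<alpha> < 1 \<and>
        (\<forall>dt. 0 < dt \<and> dt \<le> dtstar \<longrightarrow> strong_feller K dt \<and>
          (\<forall>g. bmeas_torus g \<and> (\<forall>x. 0 \<le> g x) \<longrightarrow> (\<forall>x.
             \<alpha> * integral\<^sup>L \<eta> g \<le> (Qop K dt ^^ nat \<lceil>T / dt\<rceil>) g x \<and>
             (Qop K dt ^^ nat \<lceil>T / dt\<rceil>) g x \<le> integral\<^sup>L \<eta> g / \<alpha>)))))"

definition Phi :: "(real \<Rightarrow> real^'d::finite \<Rightarrow> (real^'d) measure) \<Rightarrow> real \<Rightarrow> nat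
    \<Rightarrow> (real^'d) measure \<Rightarrow> (real^'d \<Rightarrow> real) \<Rightarrow> real" where
  "Phi K dt k \<mu> g = integral\<^sup>L \<mu> ((Qop K dt ^^ k) g) / integral\<^sup>L \<mu> ((Qop K dt ^^ k) (\<lambda>_. 1))"

definition FK_invariant :: "(real \<Rightarrow> real^'d::finite \<Rightarrow> (real^'d) measure) \<Rightarrow> real
    \<Rightarrow> (real^'d) measure \<Rightarrow> bool" where
  "FK_invariant K dt \<nu> \<longleftrightarrow> (\<forall>g. bmeas_torus g \<longrightarrow> Phi K dt 1 \<nu> g = integral\<^sup>L \<nu> g)"

end

theory Submission
  imports Defs
begin
lemma periodic_neg: assumes "periodic g" shows "g (x - axis i 1) = g x"
  using assms[unfolded periodic_def, rule_format, of "x - axis i 1" i] by simp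

lemma periodic_nat_shift: assumes "periodic g" shows "g (x + real k *\<^sub>R axis i 1) = g x"
proof (induction k arbitrary: x)
  case 0 then show ?case by simp
next
  case (Suc k)
  have "g (x + real (Suc k) *\<^sub>R axis i 1) = g ((x + real k *\<^sub>R axis i 1) + axis i 1)"
    by (simp add: algebra_simps)
  also have "\<dots> = g (x + real k *\<^sub>R axis i 1)" using assms unfolding periodic_def by blast
  finally show ?case using Suc by simp
qed

lemma periodic_int_shift: assumes "periodic g" shows "g (x + of_int k *\<^sub>R axis i 1) = g x"
proof (cases "k \<ge> 0")
  case True
  then obtain m where "k = int m" by (metis nonneg_int_cases)
  then show ?thesis using periodic_nat_shift[OF assms] by simp
next
  case False
  then obtain m where m: "k = - int m" by (metis nle_le nonpos_int_cases)
  have "g x = g ((x + of_int k *\<^sub>R axis i 1) + real m *\<^sub>R axis i 1)" using m by simp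
  then show ?thesis using periodic_nat_shift[OF assms] by simp
qed

lemma periodic_sum_shift: assumes "periodic g" "finite S"
  shows "g (y + (\<Sum>i\<in>S. of_int (c i) *\<^sub>R axis i 1)) = g y"
  using assms(2)
proof (induction S arbitrary: y)
  case empty then show ?case by simp
next
  case (insert a S)
  have "g (y + (\<Sum>i\<in>insert a S. of_int (c i) *\<^sub>R axis i 1)) =
        g ((y + (\<Sum>i\<in>S. of_int (c i) *\<^sub>R axis i 1)) + of_int (c a) *\<^sub>R axis a 1)"
    using insert by (simp add: algebra_simps)
  also have "\<dots> = g y" using periodic_int_shift[OF assms(1)] insert by simp
  finally show ?case .
qed

definition fr :: "real^'d::finite \<Rightarrow> real^'d" where "fr x = (\<chi> i. frac (x $ i))"

lemma fr_decomp: "x = fr x + (\<Sum>i\<in>UNIV. of_int (floor (x $ i)) *\<^sub>R axis i (1::real))"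
  unfolding fr_def by (simp add: vec_eq_iff axis_def frac_def if_distrib cong: if_cong)

lemma periodic_fr: "periodic g \<Longrightarrow> g (fr x) = g x"
  using periodic_sum_shift[of g UNIV "fr x" "\<lambda>i. floor (x $ i)"] fr_decomp[of x] by simp

lemma fr_in_cbox: "fr x \<in> cbox 0 1"
  unfolding fr_def mem_box_cart by (simp add: frac_lt_1 less_imp_le)

lemma fr_in_cube: "fr x \<in> cube"
  unfolding fr_def cube_def by (simp add: frac_lt_1)

lemma fr_cube: "x \<in> cube \<Longrightarrow> fr x = x"
  unfolding fr_def cube_def by (simp add: vec_eq_iff frac_eq)

lemma fr_periodic: "fr (x + axis i (1::real)) = fr x"
  unfolding fr_def by (auto simp: vec_eq_iff axis_def frac_1_eq)

lemma periodic_comp_fr: fixes h :: "real^'d::finite \<Rightarrow> 'b" shows "periodic (\<lambda>x. h (fr x))"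
  unfolding periodic_def using fr_periodic by metis

lemma fr_measurable: "fr \<in> borel_measurable borel"
proof -
  have "(\<lambda>x. fr x $ i) \<in> borel_measurable borel" for i
    unfolding fr_def frac_def by simp
  then show ?thesis
    unfolding borel_measurable_euclidean_space[where f=fr] 
    by (auto simp: Basis_vec_def inner_axis)
qed

lemma cont_periodic_bounded:
  assumes "continuous_on UNIV g" "periodic g"
  shows "bounded (range g)"
proof -
  have "range g \<subseteq> g ` cbox 0 1"
    using periodic_fr[OF assms(2)] fr_in_cbox by (metis image_eqI image_subset_iff)
  moreover have "compact (g ` cbox 0 1)"
    by (rule compact_continuous_image) (use assms(1) continuous_on_subset in auto)
  ultimately show ?thesis using compact_imp_bounded bounded_subset by blast
qed

lemma bmeas_bound: assumes "bmeas_torus g" obtains B where "B > 0" "\<And>x. \<bar>g x\<bar> \<le> B"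
proof -
  from assms have "bounded (range g)" unfolding bmeas_torus_def by simp
  then obtain B where B: "B > 0" "\<forall>y\<in>range g. norm y \<le> B"
    unfolding bounded_pos by blast
  have "\<bar>g x\<bar> \<le> B" for x using B(2) by simp
  then show ?thesis using that B(1) by blast
qed

lemma bmeas_integrable:
  assumes "finite_measure M" "sets M = sets borel" "bmeas_torus g"
  shows "integrable M g"
proof -
  obtain B where "\<And>x. \<bar>g x\<bar> \<le> B" using bmeas_bound[OF assms(3)] by metis
  moreover have "g \<in> borel_measurable M"
    unfolding measurable_cong_sets[OF assms(2) refl] using assms(3) unfolding bmeas_torus_def by simp
  ultimately show ?thesis
    by (intro finite_measure.integrable_const_bound[OF assms(1), of g B]) auto
qed

lemma bmeas_const: "bmeas_torus (\<lambda>_. c)"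
  unfolding bmeas_torus_def periodic_def by auto

lemma bmeas_lin: assumes "bmeas_torus g" "bmeas_torus h"
  shows "bmeas_torus (\<lambda>x. a * g x + b * h x)"
proof -
  obtain B1 where B1: "\<And>x. \<bar>g x\<bar> \<le> B1" using bmeas_bound[OF assms(1)] by metis
  obtain B2 where B2: "\<And>x. \<bar>h x\<bar> \<le> B2" using bmeas_bound[OF assms(2)] by metis
  have "\<bar>a * g x + b * h x\<bar> \<le> \<bar>a\<bar> * B1 + \<bar>b\<bar> * B2" for x
  proof -
    have "\<bar>a * g x + b * h x\<bar> \<le> \<bar>a\<bar> * \<bar>g x\<bar> + \<bar>b\<bar> * \<bar>h x\<bar>" using abs_triangle_ineq[of "a * g x" "b * h x"] by (simp add: abs_mult)
    also have "\<dots> \<le> \<bar>a\<bar> * B1 + \<bar>b\<bar> * B2" using B1 B2 by (intro add_mono mult_left_mono) auto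
    finally show ?thesis .
  qed
  then have "bounded (range (\<lambda>x. a * g x + b * h x))"
    unfolding bounded_iff by auto
  moreover have [measurable]: "g \<in> borel_measurable borel" "h \<in> borel_measurable borel"
    using assms unfolding bmeas_torus_def by auto
  moreover have "(\<lambda>x. a * g x + b * h x) \<in> borel_measurable borel" by measurable
  moreover have "periodic (\<lambda>x. a * g x + b * h x)" using assms unfolding bmeas_torus_def periodic_def by simp
  ultimately show ?thesis unfolding bmeas_torus_def by blast
qed

lemma bmeas_abs: assumes "bmeas_torus g" shows "bmeas_torus (\<lambda>x. \<bar>g x\<bar>)"
proof -
  obtain B1 where B1: "\<And>x. \<bar>g x\<bar> \<le> B1" using bmeas_bound[OF assms(1)] by metis
  then have "bounded (range (\<lambda>x. \<bar>g x\<bar>))" unfolding bounded_iff by auto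
  moreover have [measurable]: "g \<in> borel_measurable borel"
    using assms unfolding bmeas_torus_def by auto
  moreover have "(\<lambda>x. \<bar>g x\<bar>) \<in> borel_measurable borel" by measurable
  moreover have "periodic (\<lambda>x. \<bar>g x\<bar>)" using assms unfolding bmeas_torus_def periodic_def by simp
  ultimately show ?thesis unfolding bmeas_torus_def by blast
qed

lemma bmeas_max0: assumes "bmeas_torus g" shows "bmeas_torus (\<lambda>x. max (g x) 0)"
proof -
  obtain B1 where B1: "\<And>x. \<bar>g x\<bar> \<le> B1" using bmeas_bound[OF assms(1)] by metis
  then have "\<bar>max (g x) 0\<bar> \<le> B1" for x using B1[of x] by (smt (verit))
  then have "bounded (range (\<lambda>x. max (g x) 0))" unfolding bounded_iff by auto
  moreover have [measurable]: "g \<in> borel_measurable borel"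
    using assms unfolding bmeas_torus_def by auto
  moreover have "(\<lambda>x. max (g x) 0) \<in> borel_measurable borel" by measurable
  moreover have "periodic (\<lambda>x. max (g x) 0)" using assms unfolding bmeas_torus_def periodic_def by simp
  ultimately show ?thesis unfolding bmeas_torus_def by blast
qed

lemma supnorm_ge: assumes "bmeas_torus g" shows "\<bar>g x\<bar> \<le> supnorm g"
proof -
  obtain B1 where B1: "\<And>x. \<bar>g x\<bar> \<le> B1" using bmeas_bound[OF assms(1)] by metis
  then have "bdd_above (range (\<lambda>x. \<bar>g x\<bar>))" by (intro bdd_aboveI2[where M=B1]) auto
  then show ?thesis unfolding supnorm_def by (metis UNIV_I cSUP_upper)
qed

lemma bmeas_comp_fr: assumes "u \<in> borel_measurable borel" "\<And>x. \<bar>u x\<bar> \<le> B"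
  shows "bmeas_torus (\<lambda>x. u (fr x))"
proof -
  have "bounded (range (\<lambda>x. u (fr x)))" using assms(2) unfolding bounded_iff by auto
  moreover have "(\<lambda>x. u (fr x)) \<in> borel_measurable borel"
    using measurable_comp[OF fr_measurable assms(1)] by (simp add: comp_def)
  ultimately show ?thesis unfolding bmeas_torus_def using periodic_comp_fr by auto
qed

lemma cube_sets: "(cube :: (real^'d::finite) set) \<in> sets borel"
proof -
  have "cube = (\<Inter>i\<in>UNIV. {x::real^'d. 0 \<le> x $ i} \<inter> {x. x $ i < 1})"
    unfolding cube_def by auto
  moreover have m: "{x::real^'d. 0 \<le> x $ i} \<in> sets borel" "{x::real^'d. x $ i < 1} \<in> sets borel" for i
    by measurable
  have "(\<Inter>i\<in>UNIV. {x::real^'d. 0 \<le> x $ i} \<inter> {x. x $ i < 1}) \<in> sets borel"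
    by (rule sets.finite_INT) (auto intro!: sets.Int m)
  ultimately show ?thesis by simp
qed

locale FK =
  fixes K :: "real \<Rightarrow> real^'d::finite \<Rightarrow> (real^'d) measure" and dt :: real and n :: nat
    and \<alpha> :: real and \<eta> :: "(real^'d) measure"
  assumes kern: "kernel_torus K" and dtpos: "0 < dt" and sf: "strong_feller K dt"
    and eta: "torus_prob \<eta>" and alpha: "0 < \<alpha>" "\<alpha> < 1" and npos: "0 < n"
    and mino: "\<And>g x. bmeas_torus g \<Longrightarrow> (\<And>x. 0 \<le> g x) \<Longrightarrow> \<alpha> * integral\<^sup>L \<eta> g \<le> (Qop K dt ^^ n) g x"
    and maxo: "\<And>g x. bmeas_torus g \<Longrightarrow> (\<And>x. 0 \<le> g x) \<Longrightarrow> (Qop K dt ^^ n) g x \<le> integral\<^sup>L \<eta> g / \<alpha>"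
begin

abbreviation Q where "Q \<equiv> Qop K dt"

lemma Kfin: "finite_measure (K dt x)" and Ksets: "sets (K dt x) = sets borel"
  using kern dtpos unfolding kernel_torus_def by auto

lemma K_int: "bmeas_torus g \<Longrightarrow> integrable (K dt x) g"
  using bmeas_integrable[OF Kfin Ksets] .

lemma Q_bmeas: assumes "bmeas_torus g" shows "bmeas_torus (Q g)"
proof -
  have c: "continuous_on UNIV (Q g)" using sf assms unfolding strong_feller_def by auto
  have p: "periodic (Q g)" using kern dtpos unfolding periodic_def Qop_def kernel_torus_def by auto
  show ?thesis unfolding bmeas_torus_def
    using c p cont_periodic_bounded[OF c p] borel_measurable_continuous_onI[OF c] by auto
qed

lemma Qk_bmeas: "bmeas_torus g \<Longrightarrow> bmeas_torus ((Q ^^ k) g)"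
  by (induction k) (auto simp: Q_bmeas)

lemma Q_lin: assumes "bmeas_torus g" "bmeas_torus h"
  shows "Q (\<lambda>x. a * g x + b * h x) x = a * Q g x + b * Q h x"
  unfolding Qop_def using K_int[OF assms(1)] K_int[OF assms(2)] by simp

lemma Q_mono: assumes "bmeas_torus g" "bmeas_torus h" "\<And>x. g x \<le> h x"
  shows "Q g x \<le> Q h x"
  unfolding Qop_def using K_int[OF assms(1)] K_int[OF assms(2)] assms(3) by (intro integral_mono) auto

lemma Qk_lin: assumes "bmeas_torus g" "bmeas_torus h"
  shows "(Q ^^ k) (\<lambda>x. a * g x + b * h x) x = a * (Q ^^ k) g x + b * (Q ^^ k) h x"
proof (induction k arbitrary: x)
  case 0 then show ?case by simp
next
  case (Suc k)
  have e: "(Q ^^ k) (\<lambda>x. a * g x + b * h x) = (\<lambda>x. a * (Q ^^ k) g x + b * (Q ^^ k) h x)"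
    using Suc by (simp add: fun_eq_iff)
  have "(Q ^^ Suc k) (\<lambda>x. a * g x + b * h x) x = Q (\<lambda>x. a * (Q ^^ k) g x + b * (Q ^^ k) h x) x"
    by (simp add: e)
  also have "\<dots> = a * (Q ^^ Suc k) g x + b * (Q ^^ Suc k) h x"
    using Q_lin[OF Qk_bmeas[OF assms(1)] Qk_bmeas[OF assms(2)]] by simp
  finally show ?case .
qed

lemma Qk_mono: assumes "bmeas_torus g" "bmeas_torus h" "\<And>x. g x \<le> h x"
  shows "(Q ^^ k) g x \<le> (Q ^^ k) h x"
  using assms(3)
proof (induction k arbitrary: x)
  case 0 then show ?case by simp
next
  case (Suc k)
  then show ?case using Q_mono[OF Qk_bmeas[OF assms(1)] Qk_bmeas[OF assms(2)]] by simp
qed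

lemma Qk_const: "(Q ^^ k) (\<lambda>_. c) x = c * (Q ^^ k) (\<lambda>_. 1) x"
  using Qk_lin[OF bmeas_const bmeas_const, of k c 1 0 1 x] by simp

lemma Qk_nonneg: assumes "bmeas_torus g" "\<And>x. 0 \<le> g x" shows "0 \<le> (Q ^^ k) g x"
proof -
  have "(Q ^^ k) (\<lambda>_. 0) x \<le> (Q ^^ k) g x" by (rule Qk_mono[OF bmeas_const assms(1)]) (use assms(2) in auto)
  then show ?thesis using Qk_const[of k 0 x] by simp
qed

lemma Qk_add: "(Q ^^ (j + k)) g = (Q ^^ j) ((Q ^^ k) g)"
  by (simp add: funpow_add)

end

lemma bmeas_linI: assumes "bmeas_torus g" "bmeas_torus h" "\<And>x. F x = a * g x + b * h x"
  shows "bmeas_torus F"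
proof -
  have "F = (\<lambda>x. a * g x + b * h x)" using assms(3) by auto
  then show ?thesis using bmeas_lin[OF assms(1,2)] by simp
qed

lemma bmeas_scale: "bmeas_torus g \<Longrightarrow> bmeas_torus (\<lambda>x. c * g x)"
  using bmeas_linI[of g g "\<lambda>x. c * g x" c 0] by simp

lemma tp_fin: "torus_prob \<mu> \<Longrightarrow> finite_measure \<mu>" 
  unfolding torus_prob_def using prob_space.finite_measure by blast
lemma tp_sets: "torus_prob \<mu> \<Longrightarrow> sets \<mu> = sets borel"
  unfolding torus_prob_def by blast
lemma tp_int: "torus_prob \<mu> \<Longrightarrow> bmeas_torus g \<Longrightarrow> integrable \<mu> g"
  using bmeas_integrable tp_fin tp_sets by blast
lemma tp_meas: assumes "torus_prob \<mu>" shows "measure \<mu> (space \<mu>) = 1"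
  using assms unfolding torus_prob_def using prob_space.prob_space by blast
lemma tp_const: fixes c :: real assumes "torus_prob \<mu>" shows "integral\<^sup>L \<mu> (\<lambda>_. c) = c"
  using tp_meas[OF assms] by simp

context FK begin

abbreviation u where "u k \<equiv> (Q ^^ k) (\<lambda>_. 1)"

lemma Qk_linI: assumes "bmeas_torus g" "bmeas_torus h" "\<And>x. F x = a * g x + b * h x"
  shows "(Q ^^ k) F x = a * (Q ^^ k) g x + b * (Q ^^ k) h x"
proof -
  have "F = (\<lambda>x. a * g x + b * h x)" using assms(3) by auto
  then show ?thesis using Qk_lin[OF assms(1,2)] by simp
qed

lemma Qk_scale: assumes "bmeas_torus g" shows "(Q ^^ k) (\<lambda>x. c * g x) x = c * (Q ^^ k) g x"
  using Qk_linI[OF assms assms, of "\<lambda>x. c * g x" c 0] by simp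

lemma u_bmeas: "bmeas_torus (u k)" using Qk_bmeas[OF bmeas_const] .

lemma u_nonneg: "0 \<le> u k x" using Qk_nonneg[OF bmeas_const] by simp

lemma eta_int: "bmeas_torus g \<Longrightarrow> integrable \<eta> g" using tp_int[OF eta] .

lemma un_lower: "\<alpha> \<le> u n x"
  using mino[OF bmeas_const, of 1 x] tp_const[OF eta] tp_meas[OF eta] by simp

lemma u_mult_lower: "\<alpha> ^ i \<le> u (i * n) x"
proof (induction i arbitrary: x)
  case 0 then show ?case by simp
next
  case (Suc i)
  have "\<alpha> ^ i \<le> integral\<^sup>L \<eta> (u (i * n))"
  proof -
    have "integral\<^sup>L \<eta> (\<lambda>_. \<alpha> ^ i) \<le> integral\<^sup>L \<eta> (u (i * n))"
      by (intro integral_mono eta_int bmeas_const u_bmeas Suc)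
    then show ?thesis using tp_const[OF eta] tp_meas[OF eta] by simp
  qed
  then have "\<alpha> * \<alpha> ^ i \<le> \<alpha> * integral\<^sup>L \<eta> (u (i * n))" using alpha by simp
  also have "\<dots> \<le> (Q ^^ n) (u (i * n)) x" by (rule mino[OF u_bmeas u_nonneg])
  also have "\<dots> = u (Suc i * n) x" by (simp add: Qk_add[symmetric] add.commute)
  finally show ?case by simp
qed

lemma u_pos: "\<exists>c>0. \<forall>x. c \<le> u k x"
proof -
  define r where "r = k mod n"
  define i where "i = k div n"
  have kk: "k = i * n + r" unfolding r_def i_def by simp
  have rn: "r < n" unfolding r_def using npos by simp
  obtain B where B: "B > 0" "\<And>x. \<bar>u (n - r) x\<bar> \<le> B" using bmeas_bound[OF u_bmeas] by metis
  have ur: "\<alpha> / B \<le> u r x" for x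
  proof -
    have "\<alpha> \<le> u n x" by (rule un_lower)
    also have "u n x = (Q ^^ r) (u (n - r)) x" using rn by (simp add: Qk_add[symmetric])
    also have "\<dots> \<le> (Q ^^ r) (\<lambda>_. B) x"
      by (rule Qk_mono[OF u_bmeas bmeas_const]) (metis B(2) abs_le_D1)
    also have "\<dots> = B * u r x" by (rule Qk_const)
    finally show ?thesis using B by (simp add: divide_le_eq mult.commute)
  qed
  have "\<alpha> / B * \<alpha> ^ i \<le> u k x" for x
  proof -
    have "\<alpha> / B * \<alpha> ^ i \<le> \<alpha> / B * u (i * n) x"
      using u_mult_lower alpha B by (intro mult_left_mono) auto
    also have "\<dots> = (Q ^^ (i * n)) (\<lambda>_. \<alpha> / B) x" by (rule Qk_const[symmetric])
    also have "\<dots> \<le> (Q ^^ (i * n)) (u r) x"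
      by (rule Qk_mono[OF bmeas_const u_bmeas]) (use ur in auto)
    also have "\<dots> = u k x" using kk by (simp add: Qk_add[symmetric])
    finally show ?thesis .
  qed
  moreover have "\<alpha> / B * \<alpha> ^ i > 0" using alpha B by simp
  ultimately show ?thesis by blast
qed

lemma int_u_pos: assumes "torus_prob \<mu>" shows "0 < integral\<^sup>L \<mu> (u k)"
proof -
  obtain c where c: "c > 0" "\<And>x. c \<le> u k x" using u_pos by blast
  have "integral\<^sup>L \<mu> (\<lambda>_. c) \<le> integral\<^sup>L \<mu> (u k)"
    by (intro integral_mono tp_int[OF assms] bmeas_const u_bmeas c)
  then show ?thesis using tp_const[OF assms] tp_meas[OF assms] c by simp
qed

definition Bnd where "Bnd k g m M \<longleftrightarrow> (\<forall>x. m * u k x \<le> (Q ^^ k) g x \<and> (Q ^^ k) g x \<le> M * u k x)"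

lemma Bnd_shift: assumes "bmeas_torus g" "Bnd k g m M" shows "Bnd (j + k) g m M"
  unfolding Bnd_def
proof
  fix x
  have e1: "(Q ^^ (j + k)) g = (Q ^^ j) ((Q ^^ k) g)" by (rule Qk_add)
  have e2: "u (j + k) = (Q ^^ j) (u k)" by (rule Qk_add)
  have s1: "(Q ^^ j) (\<lambda>x. m * u k x) x = m * u (j + k) x" unfolding e2 by (rule Qk_scale[OF u_bmeas])
  have s2: "(Q ^^ j) (\<lambda>x. M * u k x) x = M * u (j + k) x" unfolding e2 by (rule Qk_scale[OF u_bmeas])
  have "(Q ^^ j) (\<lambda>x. m * u k x) x \<le> (Q ^^ j) ((Q ^^ k) g) x"
    by (rule Qk_mono[OF bmeas_scale[OF u_bmeas] Qk_bmeas[OF assms(1)]]) (use assms(2) in \<open>simp add: Bnd_def\<close>)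
  moreover have "(Q ^^ j) ((Q ^^ k) g) x \<le> (Q ^^ j) (\<lambda>x. M * u k x) x"
    by (rule Qk_mono[OF Qk_bmeas[OF assms(1)] bmeas_scale[OF u_bmeas]]) (use assms(2) in \<open>simp add: Bnd_def\<close>)
  ultimately show "m * u (j + k) x \<le> (Q ^^ (j + k)) g x \<and> (Q ^^ (j + k)) g x \<le> M * u (j + k) x"
    unfolding e1 s1[symmetric] s2[symmetric] by simp
qed

end

context FK begin

lemma Bnd_le: assumes "Bnd k g m M" shows "m \<le> M"
proof -
  obtain c where c: "c > 0" "\<And>x. c \<le> u k x" using u_pos by blast
  have "c \<le> u k 0" by (rule c)
  then have "u k 0 > 0" using c(1) by linarith
  moreover have "m * u k 0 \<le> M * u k 0" using assms unfolding Bnd_def by (meson order_trans)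
  ultimately show ?thesis by simp
qed

lemma Bnd_contract: assumes g: "bmeas_torus g" and B: "Bnd k g m M"
  shows "\<exists>m' M'. M' - m' \<le> (1 - \<alpha>\<^sup>2) * (M - m) \<and> Bnd (n + k) g m' M'"
proof -
  define v where "v = (Q ^^ k) g"
  define w1 where "w1 = (\<lambda>x. 1 * v x + (- m) * u k x)"
  define w2 where "w2 = (\<lambda>x. M * u k x + (-1) * v x)"
  have vb: "bmeas_torus v" unfolding v_def by (rule Qk_bmeas[OF g])
  have w1b: "bmeas_torus w1" unfolding w1_def by (rule bmeas_lin[OF vb u_bmeas])
  have w2b: "bmeas_torus w2" unfolding w2_def by (rule bmeas_lin[OF u_bmeas vb])
  have w1p: "0 \<le> w1 x" for x using B unfolding Bnd_def w1_def v_def by (simp add: algebra_simps)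
  have w2p: "0 \<le> w2 x" for x using B unfolding Bnd_def w2_def v_def by (simp add: algebra_simps)
  define a where "a = integral\<^sup>L \<eta> w1"
  define a' where "a' = integral\<^sup>L \<eta> w2"
  define e where "e = integral\<^sup>L \<eta> (u k)"
  have ia: "a = integral\<^sup>L \<eta> v - m * e" unfolding a_def w1_def e_def
    using eta_int[OF vb] eta_int[OF u_bmeas] by simp
  have ia': "a' = M * e - integral\<^sup>L \<eta> v" unfolding a'_def w2_def e_def
    using eta_int[OF vb] eta_int[OF u_bmeas] by simp
  have a0: "0 \<le> a" unfolding a_def by (rule integral_nonneg_AE) (simp add: w1p)
  have a'0: "0 \<le> a'" unfolding a'_def by (rule integral_nonneg_AE) (simp add: w2p)
  have e0: "0 \<le> e" unfolding e_def by (rule integral_nonneg_AE) (simp add: u_nonneg)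
  have Pv: "(Q ^^ (n + k)) g = (Q ^^ n) v" unfolding v_def by (rule Qk_add)
  have Pu: "u (n + k) = (Q ^^ n) (u k)" by (rule Qk_add)
  have Pw1: "(Q ^^ n) w1 x = (Q ^^ n) v x - m * (Q ^^ n) (u k) x" for x
    unfolding w1_def using Qk_lin[OF vb u_bmeas, where k=n and a=1 and b="-m" and x=x] by simp
  have Pw2: "(Q ^^ n) w2 x = M * (Q ^^ n) (u k) x - (Q ^^ n) v x" for x
    unfolding w2_def using Qk_lin[OF u_bmeas vb, where k=n and a=M and b="-1" and x=x] by simp
  have Pw1l: "\<alpha> * a \<le> (Q ^^ n) w1 x" for x unfolding a_def by (rule mino[OF w1b w1p])
  have Pw1u: "(Q ^^ n) w1 x \<le> a / \<alpha>" for x unfolding a_def by (rule maxo[OF w1b w1p])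
  have Pw2l: "\<alpha> * a' \<le> (Q ^^ n) w2 x" for x unfolding a'_def by (rule mino[OF w2b w2p])
  have Puu: "(Q ^^ n) (u k) x \<le> e / \<alpha>" for x unfolding e_def by (rule maxo[OF u_bmeas u_nonneg])
  have Pu0: "0 \<le> (Q ^^ n) (u k) x" for x by (rule Qk_nonneg[OF u_bmeas u_nonneg])
  have mM: "m \<le> M" by (rule Bnd_le[OF B])
  have al: "0 < \<alpha>" "\<alpha> < 1" using alpha by auto
  have q0: "0 \<le> 1 - \<alpha>\<^sup>2" using al by (simp add: power2_eq_square mult_le_one less_imp_le)
  show ?thesis
  proof (cases "e = 0")
    case True
    have "a + a' = (M - m) * e" using ia ia' by (simp add: algebra_simps)
    then have "a = 0" using True a0 a'0 by simp
    then have "(Q ^^ n) w1 x = 0" "(Q ^^ n) (u k) x = 0" for x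
      using Pw1l[of x] Pw1u[of x] Puu[of x] Pu0[of x] True al by auto
    then have "(Q ^^ n) v x = 0" "(Q ^^ n) (u k) x = 0" for x using Pw1[of x] by auto
    then have "Bnd (n + k) g 0 0" unfolding Bnd_def Pv Pu by simp
    moreover have "0 - 0 \<le> (1 - \<alpha>\<^sup>2) * (M - m)" using q0 mM by simp
    ultimately show ?thesis by blast
  next
    case False
    then have ep: "e > 0" using e0 by simp
    define m' where "m' = m + \<alpha>\<^sup>2 * (a / e)"
    define M' where "M' = M - \<alpha>\<^sup>2 * (a' / e)"
    have "a + a' = (M - m) * e" using ia ia' by (simp add: algebra_simps)
    then have "(a + a') / e = M - m" using ep by simp
    moreover have "M' - m' = (M - m) - \<alpha>\<^sup>2 * ((a + a') / e)" unfolding m'_def M'_def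
      by (simp add: add_divide_distrib algebra_simps)
    ultimately have "M' - m' = (M - m) - \<alpha>\<^sup>2 * (M - m)" by simp
    then have d: "M' - m' = (1 - \<alpha>\<^sup>2) * (M - m)" by (simp add: algebra_simps)
    have key: "\<alpha>\<^sup>2 * (c / e) * (Q ^^ n) (u k) x \<le> \<alpha> * c" if "0 \<le> c" for c x
    proof -
      have "\<alpha>\<^sup>2 * (c / e) * (Q ^^ n) (u k) x \<le> \<alpha>\<^sup>2 * (c / e) * (e / \<alpha>)"
        using that ep Puu[of x] by (intro mult_left_mono) auto
      also have "\<dots> = \<alpha> * c" using ep al by (simp add: field_simps power2_eq_square)
      finally show ?thesis .
    qed
    have "Bnd (n + k) g m' M'" unfolding Bnd_def Pv Pu
    proof
      fix x
      have 1: "m' * (Q ^^ n) (u k) x \<le> (Q ^^ n) v x"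
        using key[OF a0, of x] Pw1l[of x] Pw1[of x] unfolding m'_def by (simp add: algebra_simps)
      have 2: "(Q ^^ n) v x \<le> M' * (Q ^^ n) (u k) x"
        using key[OF a'0, of x] Pw2l[of x] Pw2[of x] unfolding M'_def by (simp add: algebra_simps)
      show "m' * (Q ^^ n) (u k) x \<le> (Q ^^ n) v x \<and> (Q ^^ n) v x \<le> M' * (Q ^^ n) (u k) x"
        using 1 2 by simp
    qed
    then show ?thesis using d by (intro exI[of _ m'] exI[of _ M'] conjI) simp_all
  qed
qed

end

context FK begin

lemma Bnd_init: assumes "bmeas_torus g" shows "Bnd 0 g (- supnorm g) (supnorm g)"
  unfolding Bnd_def using supnorm_ge[OF assms] by (simp add: abs_le_iff) (metis minus_le_iff)

lemma Bnd_iter: assumes g: "bmeas_torus g"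
  shows "\<exists>m M. Bnd (i * n) g m M \<and> M - m \<le> 2 * supnorm g * (1 - \<alpha>\<^sup>2) ^ i"
proof (induction i)
  case 0 then show ?case using Bnd_init[OF g] by (intro exI[of _ "- supnorm g"] exI[of _ "supnorm g"]) simp
next
  case (Suc i)
  then obtain m M where B: "Bnd (i * n) g m M" "M - m \<le> 2 * supnorm g * (1 - \<alpha>\<^sup>2) ^ i" by blast
  obtain m' M' where B': "M' - m' \<le> (1 - \<alpha>\<^sup>2) * (M - m)" "Bnd (n + i * n) g m' M'"
    using Bnd_contract[OF g B(1)] by blast
  have q0: "0 \<le> 1 - \<alpha>\<^sup>2" using alpha by (simp add: power2_eq_square mult_le_one less_imp_le)
  have "M' - m' \<le> (1 - \<alpha>\<^sup>2) * (2 * supnorm g * (1 - \<alpha>\<^sup>2) ^ i)"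
    using B'(1) mult_left_mono[OF B(2) q0] by linarith
  then have "M' - m' \<le> 2 * supnorm g * (1 - \<alpha>\<^sup>2) ^ Suc i" by (simp add: algebra_simps)
  moreover have "Bnd (Suc i * n) g m' M'" using B'(2) by (simp add: add.commute)
  ultimately show ?case by blast
qed

lemma Bnd_all: assumes g: "bmeas_torus g"
  shows "\<exists>m M. Bnd k g m M \<and> M - m \<le> 2 * supnorm g * (1 - \<alpha>\<^sup>2) ^ (k div n)"
proof -
  obtain m M where B: "Bnd ((k div n) * n) g m M" "M - m \<le> 2 * supnorm g * (1 - \<alpha>\<^sup>2) ^ (k div n)"
    using Bnd_iter[OF g] by blast
  have "Bnd (k mod n + (k div n) * n) g m M" by (rule Bnd_shift[OF g B(1)])
  then have "Bnd k g m M" by simp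
  then show ?thesis using B(2) by blast
qed

lemma Phi_in: assumes mu: "torus_prob \<mu>" and g: "bmeas_torus g" and B: "Bnd k g m M"
  shows "m \<le> Phi K dt k \<mu> g \<and> Phi K dt k \<mu> g \<le> M"
proof -
  define e where "e = integral\<^sup>L \<mu> (u k)"
  have ep: "0 < e" unfolding e_def by (rule int_u_pos[OF mu])
  have vb: "bmeas_torus ((Q ^^ k) g)" by (rule Qk_bmeas[OF g])
  have "integral\<^sup>L \<mu> (\<lambda>x. m * u k x) \<le> integral\<^sup>L \<mu> ((Q ^^ k) g)"
    by (intro integral_mono tp_int[OF mu] bmeas_scale u_bmeas vb) (use B in \<open>simp add: Bnd_def\<close>)
  then have 1: "m * e \<le> integral\<^sup>L \<mu> ((Q ^^ k) g)" unfolding e_def by simp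
  have "integral\<^sup>L \<mu> ((Q ^^ k) g) \<le> integral\<^sup>L \<mu> (\<lambda>x. M * u k x)"
    by (intro integral_mono tp_int[OF mu] bmeas_scale u_bmeas vb) (use B in \<open>simp add: Bnd_def\<close>)
  then have 2: "integral\<^sup>L \<mu> ((Q ^^ k) g) \<le> M * e" unfolding e_def by simp
  have "Phi K dt k \<mu> g = integral\<^sup>L \<mu> ((Q ^^ k) g) / e" unfolding Phi_def e_def by simp
  then show ?thesis using 1 2 ep by (simp add: pos_le_divide_eq pos_divide_le_eq)
qed

lemma inv_Phi: assumes nu: "torus_prob \<nu>" and inv: "FK_invariant K dt \<nu>" and g: "bmeas_torus g"
  shows "Phi K dt k \<nu> g = integral\<^sup>L \<nu> g"
proof -
  define lam where "lam = integral\<^sup>L \<nu> (Q (\<lambda>_. 1))"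
  have lp: "0 < lam" unfolding lam_def using int_u_pos[OF nu, of 1] by simp
  have step: "integral\<^sup>L \<nu> (Q h) = lam * integral\<^sup>L \<nu> h" if h: "bmeas_torus h" for h
  proof -
    have "Phi K dt 1 \<nu> h = integral\<^sup>L \<nu> h" using inv h unfolding FK_invariant_def by blast
    then have "integral\<^sup>L \<nu> (Q h) / lam = integral\<^sup>L \<nu> h" unfolding Phi_def lam_def by simp
    then show ?thesis using lp by (simp add: divide_eq_eq mult.commute)
  qed
  have it: "integral\<^sup>L \<nu> ((Q ^^ j) h) = lam ^ j * integral\<^sup>L \<nu> h" if h: "bmeas_torus h" for h j
  proof (induction j)
    case 0 then show ?case by simp
  next
    case (Suc j)
    have "integral\<^sup>L \<nu> ((Q ^^ Suc j) h) = lam * integral\<^sup>L \<nu> ((Q ^^ j) h)"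
      using step[OF Qk_bmeas[OF h]] by simp
    then show ?case using Suc by simp
  qed
  have "Phi K dt k \<nu> g = lam ^ k * integral\<^sup>L \<nu> g / (lam ^ k * integral\<^sup>L \<nu> (\<lambda>_. 1))"
    unfolding Phi_def using it[OF g] it[OF bmeas_const] by simp
  then show ?thesis using lp tp_meas[OF nu] by simp
qed

lemma conv: assumes mu: "torus_prob \<mu>" and nu: "torus_prob \<nu>" and inv: "FK_invariant K dt \<nu>"
  and g: "bmeas_torus g"
  shows "\<bar>Phi K dt k \<mu> g - integral\<^sup>L \<nu> g\<bar> \<le> 2 * supnorm g * (1 - \<alpha>\<^sup>2) ^ (k div n)"
proof -
  obtain m M where B: "Bnd k g m M" "M - m \<le> 2 * supnorm g * (1 - \<alpha>\<^sup>2) ^ (k div n)"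
    using Bnd_all[OF g] by blast
  have 1: "m \<le> Phi K dt k \<mu> g \<and> Phi K dt k \<mu> g \<le> M" by (rule Phi_in[OF mu g B(1)])
  have 2: "m \<le> integral\<^sup>L \<nu> g \<and> integral\<^sup>L \<nu> g \<le> M"
    using Phi_in[OF nu g B(1)] inv_Phi[OF nu inv g] by simp
  show ?thesis using 1 2 B(2) by linarith
qed

lemma cauchy_bound: assumes mu: "torus_prob \<mu>" and g: "bmeas_torus g" and kj: "k \<le> j"
  shows "\<bar>Phi K dt j \<mu> g - Phi K dt k \<mu> g\<bar> \<le> 2 * supnorm g * (1 - \<alpha>\<^sup>2) ^ (k div n)"
proof -
  obtain m M where B: "Bnd k g m M" "M - m \<le> 2 * supnorm g * (1 - \<alpha>\<^sup>2) ^ (k div n)"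
    using Bnd_all[OF g] by blast
  have "Bnd ((j - k) + k) g m M" by (rule Bnd_shift[OF g B(1)])
  then have Bj: "Bnd j g m M" using kj by simp
  have 1: "m \<le> Phi K dt k \<mu> g \<and> Phi K dt k \<mu> g \<le> M" by (rule Phi_in[OF mu g B(1)])
  have 2: "m \<le> Phi K dt j \<mu> g \<and> Phi K dt j \<mu> g \<le> M" by (rule Phi_in[OF mu g Bj])
  show ?thesis using 1 2 B(2) by linarith
qed

end

context FK begin

lemma supnorm_nonneg: "bmeas_torus g \<Longrightarrow> 0 \<le> supnorm g"
  using supnorm_ge[of g 0] by linarith

lemma q_bounds: "0 \<le> 1 - \<alpha>\<^sup>2" "1 - \<alpha>\<^sup>2 < 1"
  using alpha by (simp_all add: power2_eq_square mult_le_one less_imp_le)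

definition L where "L g = lim (\<lambda>k. Phi K dt k \<eta> g)"

lemma Phi_conv: assumes g: "bmeas_torus g" shows "(\<lambda>k. Phi K dt k \<eta> g) \<longlonglongrightarrow> L g"
proof -
  define S where "S = supnorm g"
  define q where "q = 1 - \<alpha>\<^sup>2"
  have S0: "0 \<le> S" unfolding S_def by (rule supnorm_nonneg[OF g])
  have q0: "0 \<le> q" "q < 1" unfolding q_def using q_bounds by auto
  have lim0: "(\<lambda>i. 2 * S * q ^ i) \<longlonglongrightarrow> 0"
    by (intro tendsto_mult_right_zero LIMSEQ_power_zero) (use q0 in simp)
  have "Cauchy (\<lambda>k. Phi K dt k \<eta> g)"
  proof (rule CauchyI)
    fix e :: real assume e: "0 < e"
    obtain N where N: "\<And>i. i \<ge> N \<Longrightarrow> 2 * S * q ^ i < e"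
      using order_tendstoD(2)[OF lim0 e] unfolding eventually_sequentially by blast
    have b: "\<bar>Phi K dt j \<eta> g - Phi K dt k \<eta> g\<bar> < e" if "N * n \<le> k" "k \<le> j" for j k
    proof -
      have "N \<le> k div n" using that npos by (metis div_le_mono div_mult_self_is_m)
      then have "q ^ (k div n) \<le> q ^ N" using q0 by (simp add: power_decreasing)
      then have "2 * S * q ^ (k div n) \<le> 2 * S * q ^ N" using S0 by (simp add: mult_left_mono)
      moreover have "\<bar>Phi K dt j \<eta> g - Phi K dt k \<eta> g\<bar> \<le> 2 * S * q ^ (k div n)"
        unfolding S_def q_def by (rule cauchy_bound[OF eta g that(2)])
      ultimately show ?thesis using N[of N] by linarith
    qed
    show "\<exists>M. \<forall>m\<ge>M. \<forall>k\<ge>M. norm (Phi K dt m \<eta> g - Phi K dt k \<eta> g) < e"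
    proof (intro exI[of _ "N * n"] allI impI)
      fix m k assume "N * n \<le> m" "N * n \<le> k"
      then show "norm (Phi K dt m \<eta> g - Phi K dt k \<eta> g) < e"
        using b[of k m] b[of m k] by (cases "k \<le> m") (auto simp: abs_minus_commute)
    qed
  qed
  then show ?thesis unfolding L_def using Cauchy_convergent convergent_LIMSEQ_iff by blast
qed

lemma Phi_lin: assumes g: "bmeas_torus g" and h: "bmeas_torus h"
  shows "Phi K dt k \<eta> (\<lambda>x. a * g x + b * h x) = a * Phi K dt k \<eta> g + b * Phi K dt k \<eta> h"
proof -
  have e: "(Q ^^ k) (\<lambda>x. a * g x + b * h x) = (\<lambda>x. a * (Q ^^ k) g x + b * (Q ^^ k) h x)"
    using Qk_lin[OF g h] by (simp add: fun_eq_iff)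
  have "integral\<^sup>L \<eta> ((Q ^^ k) (\<lambda>x. a * g x + b * h x)) =
        a * integral\<^sup>L \<eta> ((Q ^^ k) g) + b * integral\<^sup>L \<eta> ((Q ^^ k) h)"
    unfolding e using eta_int[OF Qk_bmeas[OF g]] eta_int[OF Qk_bmeas[OF h]] by simp
  then show ?thesis unfolding Phi_def by (simp add: add_divide_distrib)
qed

lemma L_lin: assumes g: "bmeas_torus g" and h: "bmeas_torus h"
  shows "L (\<lambda>x. a * g x + b * h x) = a * L g + b * L h"
proof -
  have "(\<lambda>k. Phi K dt k \<eta> (\<lambda>x. a * g x + b * h x)) \<longlonglongrightarrow> a * L g + b * L h"
    unfolding Phi_lin[OF g h] by (intro tendsto_intros Phi_conv g h)
  moreover have "(\<lambda>k. Phi K dt k \<eta> (\<lambda>x. a * g x + b * h x)) \<longlonglongrightarrow> L (\<lambda>x. a * g x + b * h x)"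
    by (rule Phi_conv[OF bmeas_lin[OF g h]])
  ultimately show ?thesis using LIMSEQ_unique by blast
qed

lemma L_linI: assumes g: "bmeas_torus g" and h: "bmeas_torus h" and F: "\<And>x. F x = a * g x + b * h x"
  shows "L F = a * L g + b * L h"
proof -
  have "F = (\<lambda>x. a * g x + b * h x)" using F by auto
  then show ?thesis using L_lin[OF g h] by simp
qed

lemma Phi_one: "Phi K dt k \<mu> (\<lambda>_. 1) = 1" if "torus_prob \<mu>"
  unfolding Phi_def using int_u_pos[OF that, of k] by simp

lemma L_one: "L (\<lambda>_. 1) = 1"
proof -
  have "(\<lambda>k. Phi K dt k \<eta> (\<lambda>_. 1)) \<longlonglongrightarrow> 1" unfolding Phi_one[OF eta] by simp
  then show ?thesis using Phi_conv[OF bmeas_const] LIMSEQ_unique by blast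
qed

lemma L_nonneg: assumes g: "bmeas_torus g" and p: "\<And>x. 0 \<le> g x" shows "0 \<le> L g"
proof -
  have "0 \<le> Phi K dt k \<eta> g" for k
  proof -
    have "0 \<le> integral\<^sup>L \<eta> ((Q ^^ k) g)" by (rule integral_nonneg_AE) (simp add: Qk_nonneg[OF g p])
    moreover have "0 < integral\<^sup>L \<eta> (u k)" by (rule int_u_pos[OF eta])
    ultimately show ?thesis unfolding Phi_def by simp
  qed
  then show ?thesis using LIMSEQ_le_const[OF Phi_conv[OF g]] by blast
qed

lemma L_upper: assumes g: "bmeas_torus g" and p: "\<And>x. 0 \<le> g x"
  shows "L g \<le> integral\<^sup>L \<eta> g / \<alpha>\<^sup>2"
proof -
  define c where "c = integral\<^sup>L \<eta> g"
  have al: "0 < \<alpha>" using alpha by simp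
  have "Phi K dt k \<eta> g \<le> c / \<alpha>\<^sup>2" if kn: "n \<le> k" for k
  proof -
    define j where "j = k - n"
    have kj: "k = j + n" unfolding j_def using kn by simp
    define E where "E = integral\<^sup>L \<eta> (u j)"
    have Ep: "0 < E" unfolding E_def by (rule int_u_pos[OF eta])
    have Pg: "(Q ^^ n) g x \<le> c / \<alpha>" for x unfolding c_def by (rule maxo[OF g p])
    have up: "(Q ^^ k) g x \<le> (c / \<alpha>) * u j x" for x
    proof -
      have "(Q ^^ k) g x = (Q ^^ j) ((Q ^^ n) g) x" unfolding kj by (simp add: Qk_add)
      also have "\<dots> \<le> (Q ^^ j) (\<lambda>_. c / \<alpha>) x"
        by (rule Qk_mono[OF Qk_bmeas[OF g] bmeas_const]) (rule Pg)
      also have "\<dots> = (c / \<alpha>) * u j x" by (rule Qk_const)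
      finally show ?thesis .
    qed
    have lo: "\<alpha> * u j x \<le> u k x" for x
    proof -
      have "\<alpha> * u j x = (Q ^^ j) (\<lambda>_. \<alpha>) x" by (rule Qk_const[symmetric])
      also have "\<dots> \<le> (Q ^^ j) (u n) x"
        by (rule Qk_mono[OF bmeas_const u_bmeas]) (rule un_lower)
      also have "\<dots> = u k x" unfolding kj by (simp add: Qk_add)
      finally show ?thesis .
    qed
    have I1: "integral\<^sup>L \<eta> ((Q ^^ k) g) \<le> (c / \<alpha>) * E"
    proof -
      have "integral\<^sup>L \<eta> ((Q ^^ k) g) \<le> integral\<^sup>L \<eta> (\<lambda>x. (c / \<alpha>) * u j x)"
        by (intro integral_mono eta_int Qk_bmeas g bmeas_scale u_bmeas up)
      then show ?thesis unfolding E_def by simp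
    qed
    have I2: "\<alpha> * E \<le> integral\<^sup>L \<eta> (u k)"
    proof -
      have "integral\<^sup>L \<eta> (\<lambda>x. \<alpha> * u j x) \<le> integral\<^sup>L \<eta> (u k)"
        by (intro integral_mono eta_int bmeas_scale u_bmeas lo)
      then show ?thesis unfolding E_def by simp
    qed
    have I0: "0 \<le> integral\<^sup>L \<eta> ((Q ^^ k) g)" by (rule integral_nonneg_AE) (simp add: Qk_nonneg[OF g p])
    have aE: "0 < \<alpha> * E" using al Ep by simp
    have "Phi K dt k \<eta> g = integral\<^sup>L \<eta> ((Q ^^ k) g) / integral\<^sup>L \<eta> (u k)" unfolding Phi_def by simp
    also have "\<dots> \<le> integral\<^sup>L \<eta> ((Q ^^ k) g) / (\<alpha> * E)"
      by (rule divide_left_mono[OF I2 I0]) (use aE I2 in simp)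
    also have "\<dots> \<le> ((c / \<alpha>) * E) / (\<alpha> * E)"
      by (rule divide_right_mono[OF I1]) (use aE in simp)
    also have "\<dots> = c / \<alpha>\<^sup>2" using Ep al by (simp add: field_simps power2_eq_square)
    finally show ?thesis .
  qed
  then have "\<exists>N. \<forall>k\<ge>N. Phi K dt k \<eta> g \<le> c / \<alpha>\<^sup>2" by blast
  then show ?thesis unfolding c_def[symmetric] using LIMSEQ_le_const2[OF Phi_conv[OF g]] by blast
qed

lemma L_Q: assumes g: "bmeas_torus g" shows "L (Q g) = L (Q (\<lambda>_. 1)) * L g"
proof -
  have e: "Phi K dt k \<eta> (Q g) = Phi K dt (Suc k) \<eta> g * Phi K dt k \<eta> (Q (\<lambda>_. 1))" for k
  proof -
    have p: "0 < integral\<^sup>L \<eta> (u (Suc k))" by (rule int_u_pos[OF eta])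
    have a: "(Q ^^ k) (Q g) = (Q ^^ Suc k) g" by (simp only: funpow_Suc_right comp_apply)
    have b: "(Q ^^ k) (Q (\<lambda>_. 1)) = u (Suc k)" by (simp only: funpow_Suc_right comp_apply)
    show ?thesis unfolding Phi_def a b using p by simp
  qed
  have "(\<lambda>k. Phi K dt k \<eta> (Q g)) \<longlonglongrightarrow> L g * L (Q (\<lambda>_. 1))"
    unfolding e
    by (intro tendsto_mult Phi_conv Q_bmeas bmeas_const LIMSEQ_Suc[OF Phi_conv[OF g]])
  then show ?thesis using Phi_conv[OF Q_bmeas[OF g]] LIMSEQ_unique by (metis mult.commute)
qed

lemma L_mono: assumes g: "bmeas_torus g" and h: "bmeas_torus h" and le: "\<And>x. g x \<le> h x"
  shows "L g \<le> L h"
proof -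
  have "0 \<le> L (\<lambda>x. 1 * h x + (-1) * g x)"
    by (rule L_nonneg[OF bmeas_lin[OF h g]]) (use le in simp)
  then show ?thesis using L_lin[OF h g, of 1 "-1"] by simp
qed

lemma L_cont: assumes hb: "\<And>j. bmeas_torus (h j)" and hh: "bmeas_torus f"
  and lim: "\<And>x. (\<lambda>j. h j x) \<longlonglongrightarrow> f x" and bd: "\<And>j x. \<bar>h j x\<bar> \<le> B" and bf: "\<And>x. \<bar>f x\<bar> \<le> B"
  shows "(\<lambda>j. L (h j)) \<longlonglongrightarrow> L f"
proof -
  have al: "0 < \<alpha>\<^sup>2" using alpha by simp
  define d where "d j = (\<lambda>x. \<bar>h j x - f x\<bar>)" for j
  have db: "bmeas_torus (d j)" for j unfolding d_def
    by (rule bmeas_abs) (rule bmeas_linI[OF hb hh, where a=1 and b="-1"], simp)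
  have est: "\<bar>L (h j) - L f\<bar> \<le> integral\<^sup>L \<eta> (d j) / \<alpha>\<^sup>2" for j
  proof -
    have m1: "L (\<lambda>x. 1 * h j x + (-1) * f x) = L (h j) - L f" using L_lin[OF hb hh, of 1 j "-1"] by simp
    have m2: "L (\<lambda>x. 1 * f x + (-1) * h j x) = L f - L (h j)" using L_lin[OF hh hb, of 1 "-1" j] by simp
    have "L (\<lambda>x. 1 * h j x + (-1) * f x) \<le> L (d j)"
      by (rule L_mono[OF bmeas_lin[OF hb hh] db]) (simp add: d_def)
    moreover have "L (\<lambda>x. 1 * f x + (-1) * h j x) \<le> L (d j)"
      by (rule L_mono[OF bmeas_lin[OF hh hb] db]) (simp add: d_def)
    moreover have "L (d j) \<le> integral\<^sup>L \<eta> (d j) / \<alpha>\<^sup>2" by (rule L_upper[OF db]) (simp add: d_def)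
    ultimately show ?thesis using m1 m2 by linarith
  qed
  have "(\<lambda>j. integral\<^sup>L \<eta> (d j)) \<longlonglongrightarrow> integral\<^sup>L \<eta> (\<lambda>x. 0)"
  proof (rule integral_dominated_convergence[where w="\<lambda>_. 2 * B"])
    show "(\<lambda>x. 0::real) \<in> borel_measurable \<eta>" by simp
    show "d j \<in> borel_measurable \<eta>" for j using eta_int[OF db] by auto
    show "integrable \<eta> (\<lambda>_. 2 * B)" by (rule eta_int[OF bmeas_const])
    show "AE x in \<eta>. (\<lambda>j. d j x) \<longlonglongrightarrow> 0"
    proof (rule AE_I2)
      fix x
      have "(\<lambda>j. \<bar>h j x - f x\<bar>) \<longlonglongrightarrow> \<bar>f x - f x\<bar>" by (intro tendsto_intros lim)
      then show "(\<lambda>j. d j x) \<longlonglongrightarrow> 0" by (simp add: d_def)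
    qed
    show "AE x in \<eta>. norm (d j x) \<le> 2 * B" for j
    proof (rule AE_I2)
      fix x
      show "norm (d j x) \<le> 2 * B" using bd[of j x] bf[of x] unfolding d_def by simp
    qed
  qed
  then have "(\<lambda>j. integral\<^sup>L \<eta> (d j) / \<alpha>\<^sup>2) \<longlonglongrightarrow> 0"
    using tendsto_divide[OF _ tendsto_const, of _ 0 sequentially "\<alpha>\<^sup>2"] al by simp
  then have "(\<lambda>j. L (h j) - L f) \<longlonglongrightarrow> 0"
    by (rule Lim_null_comparison[rotated]) (simp add: est)
  then show ?thesis using LIM_zero_iff by blast
qed

end

context FK begin

definition ind :: "(real^'d) set \<Rightarrow> real^'d \<Rightarrow> real" where "ind A = (\<lambda>x. indicator A (fr x))"

lemma ind_bmeas: "A \<in> sets borel \<Longrightarrow> bmeas_torus (ind A)"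
  unfolding ind_def by (rule bmeas_comp_fr[where B=1]) auto

lemma L_zero: "L (\<lambda>_. 0) = 0"
  using L_lin[OF bmeas_const bmeas_const, of 0 0 0 0] by simp

definition nuF where "nuF A = ennreal (L (ind A))"
definition nu where "nu = measure_of UNIV (sets borel) nuF"

lemma ind_nonneg: "0 \<le> ind A x" unfolding ind_def by (simp add: indicator_def)

lemma L_ind_nonneg: assumes "A \<in> sets borel" shows "0 \<le> L (ind A)"
  by (rule L_nonneg[OF ind_bmeas[OF assms] ind_nonneg])

lemma borel_sa: "sigma_algebra UNIV (sets (borel :: (real^'d) measure))"
  using sets.sigma_algebra_axioms[of "borel :: (real^'d) measure"] by simp

lemma nu_meas: "f \<in> borel_measurable nu \<longleftrightarrow> f \<in> borel_measurable borel"
  unfolding nu_def using sigma_algebra.sets_measure_of_eq[OF borel_sa] measurable_cong_sets by blast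

lemma ind_finite_union:
  assumes A: "\<And>i. A i \<in> sets borel" and dj: "disjoint_family A"
  shows "(\<Sum>i<(N::nat). L (ind (A i))) = L (ind (\<Union>i<N. A i))"
proof (induction N)
  case 0 then show ?case using L_zero by (simp add: ind_def)
next
  case (Suc N)
  have U: "(\<Union>i<N. A i) \<in> sets borel" using A by auto
  have e: "ind (\<Union>i<Suc N. A i) x = 1 * ind (\<Union>i<N. A i) x + 1 * ind (A N) x" for x
  proof -
    have "(\<Union>i<Suc N. A i) = (\<Union>i<N. A i) \<union> A N" by (auto simp: lessThan_Suc)
    moreover have "A i \<inter> A N = {}" if "i < N" for i
      using dj that unfolding disjoint_family_on_def by (metis UNIV_I less_irrefl)
    then have "(\<Union>i<N. A i) \<inter> A N = {}" by auto
    ultimately show ?thesis unfolding ind_def by (simp add: indicator_disj_union)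
  qed
  have "L (ind (\<Union>i<Suc N. A i)) = 1 * L (ind (\<Union>i<N. A i)) + 1 * L (ind (A N))"
    by (rule L_linI[OF ind_bmeas[OF U] ind_bmeas[OF A]]) (rule e)
  then show ?case using Suc by simp
qed

lemma nuF_ca: "countably_additive (sets borel) nuF"
  unfolding countably_additive_def
proof (intro allI impI)
  fix A :: "nat \<Rightarrow> (real^'d) set"
  assume A: "range A \<subseteq> sets borel" and dj: "disjoint_family A" and U: "(\<Union>i. A i) \<in> sets borel"
  have Ai: "\<And>i. A i \<in> sets borel" using A by auto
  have "(\<lambda>N. L (ind (\<Union>i<N. A i))) \<longlonglongrightarrow> L (ind (\<Union>i. A i))"
  proof (rule L_cont[where B=1])
    show "bmeas_torus (ind (\<Union>i<N. A i))" for N by (rule ind_bmeas) (use Ai in auto)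
    show "bmeas_torus (ind (\<Union>i. A i))" by (rule ind_bmeas[OF U])
    show "(\<lambda>N. ind (\<Union>i<N. A i) x) \<longlonglongrightarrow> ind (\<Union>i. A i) x" for x
      unfolding ind_def by (rule LIMSEQ_indicator_UN)
  qed (auto simp: ind_def)
  then have "(\<lambda>N. \<Sum>i<N. L (ind (A i))) \<longlonglongrightarrow> L (ind (\<Union>i. A i))"
    using ind_finite_union[OF Ai dj] by simp
  then have s: "(\<lambda>i. L (ind (A i))) sums L (ind (\<Union>i. A i))" unfolding sums_def .
  have "(\<Sum>i. ennreal (L (ind (A i)))) = ennreal (\<Sum>i. L (ind (A i)))"
    by (rule suminf_ennreal2) (use s L_ind_nonneg[OF Ai] sums_summable in auto)
  also have "\<dots> = ennreal (L (ind (\<Union>i. A i)))" using s sums_unique by metis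
  finally show "(\<Sum>i. nuF (A i)) = nuF (\<Union>i. A i)" unfolding nuF_def .
qed

lemma nu_sets: "sets nu = sets borel"
  unfolding nu_def by (rule sigma_algebra.sets_measure_of_eq[OF borel_sa])

lemma nu_space: "space nu = UNIV"
  unfolding nu_def by simp

lemma nu_emeasure: "A \<in> sets borel \<Longrightarrow> emeasure nu A = ennreal (L (ind A))"
  unfolding nu_def nuF_def[symmetric]
proof (rule emeasure_measure_of_sigma)
  show "sigma_algebra UNIV (sets (borel :: (real^'d) measure))" by (rule borel_sa)
  show "positive (sets borel) nuF" unfolding positive_def nuF_def ind_def using L_zero by simp
  show "countably_additive (sets borel) nuF" by (rule nuF_ca)
qed

lemma ind_cube: "ind cube = (\<lambda>_. 1)"
  unfolding ind_def by (simp add: fun_eq_iff indicator_def fr_in_cube)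

lemma ind_UNIV: "ind UNIV = (\<lambda>_. 1)"
  unfolding ind_def by auto

lemma nu_tp: "torus_prob nu"
proof -
  have "emeasure nu (space nu) = 1" unfolding nu_space using nu_emeasure[of UNIV] ind_UNIV L_one by simp
  then have "prob_space nu" by (rule prob_spaceI)
  moreover have "emeasure nu cube = 1" using nu_emeasure[OF cube_sets] ind_cube L_one by simp
  ultimately show ?thesis unfolding torus_prob_def using nu_sets by blast
qed

lemma nu_integrable: fixes u' :: "real^'d \<Rightarrow> real" assumes "u' \<in> borel_measurable borel" "\<And>x. \<bar>u' x\<bar> \<le> B" shows "integrable nu u'"
proof -
  have "u' \<in> borel_measurable nu" using assms(1) by (simp add: nu_meas)
  then show ?thesis using assms(2)
    by (intro finite_measure.integrable_const_bound[OF tp_fin[OF nu_tp], of u' B]) auto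
qed

lemma nu_L_nonneg:
  assumes um: "u' \<in> borel_measurable nu" and up: "\<And>x. 0 \<le> u' x"
  shows "(\<exists>B. \<forall>x. u' x \<le> B) \<longrightarrow> L (\<lambda>x. u' (fr x)) = integral\<^sup>L nu u'"
  using um up
proof (induction u' rule: borel_measurable_induct_real)
  case (set A)
  then have A: "A \<in> sets borel" using nu_sets by simp
  have "integral\<^sup>L nu (indicator A) = measure nu A" using A nu_space by simp
  also have "\<dots> = L (ind A)" unfolding measure_def using nu_emeasure[OF A] L_ind_nonneg[OF A] by simp
  finally show ?case unfolding ind_def by simp
next
  case (mult v c)
  show ?case
  proof
    assume "\<exists>B. \<forall>x. c * v x \<le> B"
    then obtain B where B: "\<And>x. c * v x \<le> B" by blast
    show "L (\<lambda>x. c * v (fr x)) = integral\<^sup>L nu (\<lambda>x. c * v x)"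
    proof (cases "c = 0")
      case True then show ?thesis using L_zero by simp
    next
      case False
      then have cp: "0 < c" using mult.hyps(1) by simp
      have vb: "v x \<le> B / c" for x using B[of x] cp by (simp add: pos_le_divide_eq mult.commute)
      have vm: "v \<in> borel_measurable borel" using mult.hyps(2) by (simp add: nu_meas)
      have vbm: "bmeas_torus (\<lambda>x. v (fr x))"
        by (rule bmeas_comp_fr[OF vm, where B="B / c"]) (use vb mult.hyps(3) in \<open>auto simp: abs_le_iff\<close>)
      have "L (\<lambda>x. v (fr x)) = integral\<^sup>L nu v" using mult.IH vb by blast
      moreover have "L (\<lambda>x. c * v (fr x)) = c * L (\<lambda>x. v (fr x))"
        using L_linI[OF vbm vbm, of "\<lambda>x. c * v (fr x)" c 0] by simp
      ultimately show ?thesis by simp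
    qed
  qed
next
  case (add v w)
  show ?case
  proof
    assume "\<exists>B. \<forall>x. w x + v x \<le> B"
    then obtain B where B: "\<And>x. w x + v x \<le> B" by blast
    have vb: "v x \<le> B" "w x \<le> B" for x using B[of x] add.hyps(2)[of x] add.hyps(4)[of x] by auto
    have vm: "v \<in> borel_measurable borel" "w \<in> borel_measurable borel"
      using add.hyps(1,3) by (simp_all add: nu_meas)
    have vbm: "bmeas_torus (\<lambda>x. v (fr x))"
      by (rule bmeas_comp_fr[OF vm(1), where B=B]) (use vb add.hyps(2) in \<open>auto simp: abs_le_iff\<close>)
    have wbm: "bmeas_torus (\<lambda>x. w (fr x))"
      by (rule bmeas_comp_fr[OF vm(2), where B=B]) (use vb add.hyps(4) in \<open>auto simp: abs_le_iff\<close>)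
    have iv: "integrable nu v" by (rule nu_integrable[OF vm(1), where B=B]) (use vb add.hyps(2) in \<open>auto simp: abs_le_iff\<close>)
    have iw: "integrable nu w" by (rule nu_integrable[OF vm(2), where B=B]) (use vb add.hyps(4) in \<open>auto simp: abs_le_iff\<close>)
    have "L (\<lambda>x. w (fr x) + v (fr x)) = 1 * L (\<lambda>x. w (fr x)) + 1 * L (\<lambda>x. v (fr x))"
      by (rule L_linI[OF wbm vbm]) simp
    moreover have "L (\<lambda>x. v (fr x)) = integral\<^sup>L nu v" using add.IH(1) vb by blast
    moreover have "L (\<lambda>x. w (fr x)) = integral\<^sup>L nu w" using add.IH(2) vb by blast
    ultimately show "L (\<lambda>x. w (fr x) + v (fr x)) = integral\<^sup>L nu (\<lambda>x. w x + v x)"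
      using iv iw by simp
  qed
next
  case (seq U)
  show ?case
  proof
    assume "\<exists>B. \<forall>x. u' x \<le> B"
    then obtain B where B: "\<And>x. u' x \<le> B" by blast
    have Ul: "U i x \<le> u' x" for i x
    proof (rule incseq_le)
      show "incseq (\<lambda>i. U i x)" using seq.hyps(3) unfolding incseq_def le_fun_def by auto
      show "(\<lambda>i. U i x) \<longlonglongrightarrow> u' x" using seq.hyps(4) nu_space by simp
    qed
    have u0: "0 \<le> u' x" for x using Ul[of 0 x] seq.hyps(2)[of 0 x] by simp
    have Um: "U i \<in> borel_measurable borel" for i using seq.hyps(1) by (simp add: nu_meas)
    have um': "u' \<in> borel_measurable borel" using um by (simp add: nu_meas)
    have Ubm: "bmeas_torus (\<lambda>x. U i (fr x))" for i
      by (rule bmeas_comp_fr[OF Um, where B=B]) (use Ul B seq.hyps(2) in \<open>auto simp: abs_le_iff intro: order_trans\<close>)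
    have ubm: "bmeas_torus (\<lambda>x. u' (fr x))"
      by (rule bmeas_comp_fr[OF um', where B=B]) (use B u0 in \<open>auto simp: abs_le_iff\<close>)
    have "(\<lambda>i. L (\<lambda>x. U i (fr x))) \<longlonglongrightarrow> L (\<lambda>x. u' (fr x))"
    proof (rule L_cont[OF Ubm ubm, where B=B])
      show "(\<lambda>i. U i (fr x)) \<longlonglongrightarrow> u' (fr x)" for x using seq.hyps(4) nu_space by simp
      show "\<bar>U i (fr x)\<bar> \<le> B" for i x using Ul[of i "fr x"] B[of "fr x"] seq.hyps(2)[of i "fr x"] by simp
      show "\<bar>u' (fr x)\<bar> \<le> B" for x using B[of "fr x"] u0[of "fr x"] by simp
    qed
    moreover have "(\<lambda>i. L (\<lambda>x. U i (fr x))) = (\<lambda>i. integral\<^sup>L nu (U i))"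
    proof
      fix i
      show "L (\<lambda>x. U i (fr x)) = integral\<^sup>L nu (U i)" using seq.IH[of i] Ul B by (meson order_trans)
    qed
    moreover have "(\<lambda>i. integral\<^sup>L nu (U i)) \<longlonglongrightarrow> integral\<^sup>L nu u'"
    proof (rule integral_dominated_convergence[where w="\<lambda>_. B"])
      show "u' \<in> borel_measurable nu" by (rule um)
      show "U i \<in> borel_measurable nu" for i by (rule seq.hyps(1))
      show "integrable nu (\<lambda>_. B)" by (rule nu_integrable[where B="\<bar>B\<bar>"]) auto
      show "AE x in nu. (\<lambda>i. U i x) \<longlonglongrightarrow> u' x" using seq.hyps(4) by (intro AE_I2) auto
      show "AE x in nu. norm (U i x) \<le> B" for i
      proof (rule AE_I2)
        fix x show "norm (U i x) \<le> B" using Ul[of i x] B[of x] seq.hyps(2)[of i x] by simp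
      qed
    qed
    ultimately show "L (\<lambda>x. u' (fr x)) = integral\<^sup>L nu u'" using LIMSEQ_unique by metis
  qed
qed

end

lemma tp_space: "torus_prob \<mu> \<Longrightarrow> space \<mu> = UNIV"
  using sets_eq_imp_space_eq[OF tp_sets] by simp

lemma tp_meas_iff: "torus_prob \<mu> \<Longrightarrow> f \<in> borel_measurable \<mu> \<longleftrightarrow> f \<in> borel_measurable borel"
  using measurable_cong_sets[OF tp_sets refl] by blast

lemma tp_AE_cube: assumes "torus_prob \<mu>" shows "AE x in \<mu>. x \<in> cube"
proof -
  interpret prob_space \<mu> using assms unfolding torus_prob_def by blast
  have "emeasure \<mu> cube = 1" using assms unfolding torus_prob_def by blast
  then have "prob cube = 1" unfolding measure_def by simp
  then show ?thesis by (rule AE_prob_1)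
qed

lemma tp_measure_fr:
  assumes mu: "torus_prob \<mu>" and A: "A \<in> sets borel"
  shows "measure \<mu> A = integral\<^sup>L \<mu> (\<lambda>x. indicator A (fr x))"
proof -
  have "measure \<mu> A = integral\<^sup>L \<mu> (indicator A)" using tp_space[OF mu] by simp
  also have "\<dots> = integral\<^sup>L \<mu> (\<lambda>x. indicator A (fr x))"
  proof (rule integral_cong_AE)
    show "indicator A \<in> borel_measurable \<mu>" using A by (simp add: tp_meas_iff[OF mu])
    have "(\<lambda>x. indicator A (fr x) :: real) \<in> borel_measurable borel"
      using measurable_comp[OF fr_measurable borel_measurable_indicator[OF A]] by (simp add: comp_def)
    then show "(\<lambda>x. indicator A (fr x) :: real) \<in> borel_measurable \<mu>" by (simp add: tp_meas_iff[OF mu])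
    show "AE x in \<mu>. indicator A x = (indicator A (fr x) :: real)"
      using tp_AE_cube[OF mu] by eventually_elim (simp add: fr_cube)
  qed
  finally show ?thesis .
qed

context FK begin

lemma nu_L: assumes g: "bmeas_torus g" shows "integral\<^sup>L nu g = L g"
proof -
  define gp where "gp = (\<lambda>x. max (g x) 0)"
  define gm where "gm = (\<lambda>x. max (- g x) 0)"
  have ng: "bmeas_torus (\<lambda>x. - g x)" by (rule bmeas_linI[OF g g, where a="-1" and b=0]) simp
  have gpb: "bmeas_torus gp" unfolding gp_def by (rule bmeas_max0[OF g])
  have gmb: "bmeas_torus gm" unfolding gm_def by (rule bmeas_max0[OF ng])
  obtain B where B0: "B > 0" and B: "\<And>x. \<bar>g x\<bar> \<le> B" using bmeas_bound[OF g] by metis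
  have key: "L h = integral\<^sup>L nu h" if hb: "bmeas_torus h" and hp: "\<And>x. 0 \<le> h x" and hB: "\<And>x. h x \<le> B" for h
  proof -
    have hm: "h \<in> borel_measurable nu" using hb unfolding bmeas_torus_def by (simp add: nu_meas)
    have "L (\<lambda>x. h (fr x)) = integral\<^sup>L nu h" using nu_L_nonneg[OF hm hp] hB by blast
    moreover have "(\<lambda>x. h (fr x)) = h" using periodic_fr hb unfolding bmeas_torus_def by auto
    ultimately show ?thesis by simp
  qed
  have p: "L gp = integral\<^sup>L nu gp" by (rule key[OF gpb]) (use B B0 in \<open>auto simp: gp_def abs_le_iff\<close>)
  have m: "L gm = integral\<^sup>L nu gm" by (rule key[OF gmb]) (use B B0 in \<open>auto simp: gm_def abs_le_iff\<close>)
  have e: "g x = 1 * gp x + (-1) * gm x" for x unfolding gp_def gm_def by auto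
  have "L g = 1 * L gp + (-1) * L gm" by (rule L_linI[OF gpb gmb e])
  moreover have "integral\<^sup>L nu g = integral\<^sup>L nu gp - integral\<^sup>L nu gm"
  proof -
    have "g = (\<lambda>x. gp x - gm x)" using e by (simp add: fun_eq_iff)
    moreover have "integrable nu gp" "integrable nu gm" using tp_int[OF nu_tp] gpb gmb by auto
    ultimately show ?thesis by simp
  qed
  ultimately show ?thesis using p m by simp
qed

lemma nu_inv: "FK_invariant K dt nu"
  unfolding FK_invariant_def
proof (intro allI impI)
  fix g :: "real^'d \<Rightarrow> real" assume g: "bmeas_torus g"
  have pos: "0 < integral\<^sup>L nu (Q (\<lambda>_. 1))" using int_u_pos[OF nu_tp, of 1] by simp
  have "Phi K dt 1 nu g = integral\<^sup>L nu (Q g) / integral\<^sup>L nu (Q (\<lambda>_. 1))" unfolding Phi_def by simp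
  also have "\<dots> = L (Q g) / L (Q (\<lambda>_. 1))"
    using nu_L[OF Q_bmeas[OF g]] nu_L[OF Q_bmeas[OF bmeas_const]] by simp
  also have "\<dots> = L g" using L_Q[OF g] pos nu_L[OF Q_bmeas[OF bmeas_const]] by simp
  also have "\<dots> = integral\<^sup>L nu g" using nu_L[OF g] by simp
  finally show "Phi K dt 1 nu g = integral\<^sup>L nu g" .
qed

lemma exists_inv: "\<exists>\<nu>. torus_prob \<nu> \<and> FK_invariant K dt \<nu>"
  using nu_tp nu_inv by blast

lemma inv_unique: assumes t1: "torus_prob \<nu>1" and i1: "FK_invariant K dt \<nu>1"
  and t2: "torus_prob \<nu>2" and i2: "FK_invariant K dt \<nu>2"
  shows "\<nu>1 = \<nu>2"
proof -
  have eq: "integral\<^sup>L \<nu>1 g = integral\<^sup>L \<nu>2 g" if g: "bmeas_torus g" for g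
  proof -
    define q where "q = 1 - \<alpha>\<^sup>2"
    have q0: "0 \<le> q" "q < 1" unfolding q_def using q_bounds by auto
    have b: "\<bar>integral\<^sup>L \<nu>1 g - integral\<^sup>L \<nu>2 g\<bar> \<le> 2 * supnorm g * q ^ i" for i
    proof -
      have "\<bar>Phi K dt (i * n) \<nu>1 g - integral\<^sup>L \<nu>2 g\<bar> \<le> 2 * supnorm g * (1 - \<alpha>\<^sup>2) ^ (i * n div n)"
        by (rule conv[OF t1 t2 i2 g])
      then show ?thesis using inv_Phi[OF t1 i1 g] npos unfolding q_def by simp
    qed
    have lim0: "(\<lambda>i. 2 * supnorm g * q ^ i) \<longlonglongrightarrow> 0"
      by (intro tendsto_mult_right_zero LIMSEQ_power_zero) (use q0 in simp)
    have "\<bar>integral\<^sup>L \<nu>1 g - integral\<^sup>L \<nu>2 g\<bar> \<le> 0"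
      using LIMSEQ_le_const[OF lim0] b by blast
    then show ?thesis by simp
  qed
  show ?thesis
  proof (rule measure_eqI)
    show "sets \<nu>1 = sets \<nu>2" using tp_sets[OF t1] tp_sets[OF t2] by simp
    fix A assume "A \<in> sets \<nu>1"
    then have A: "A \<in> sets borel" using tp_sets[OF t1] by simp
    have "measure \<nu>1 A = measure \<nu>2 A"
      using tp_measure_fr[OF t1 A] tp_measure_fr[OF t2 A] eq[OF ind_bmeas[OF A]] unfolding ind_def by simp
    then show "emeasure \<nu>1 A = emeasure \<nu>2 A"
      using finite_measure.emeasure_eq_measure[OF tp_fin[OF t1]] finite_measure.emeasure_eq_measure[OF tp_fin[OF t2]]
      by simp
  qed
qed

end

lemma arith_bound:
  fixes q T dt :: real and n k :: nat
  assumes q: "0 < q" "q < 1" and n: "0 < n" and dt: "0 < dt" and T: "0 < T" and nd: "real n * dt \<le> 2 * T"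
  shows "q ^ (k div n) \<le> (1 / q) * exp (- (- ln q / (2 * T)) * real k * dt)"
proof -
  define m where "m = k div n"
  have lq: "ln q < 0" using q by simp
  have kn: "k < n * (m + 1)" unfolding m_def using n
    by (metis add.commute div_mult_mod_eq mod_less_divisor mult.commute nat_add_left_cancel_less distrib_left mult_1_right)
  then have "real k < real n * (real m + 1)" by (metis of_nat_1 of_nat_add of_nat_less_iff of_nat_mult)
  then have "real k * dt < (real n * (real m + 1)) * dt" using dt by (rule mult_strict_right_mono)
  then have "real k * dt < real n * dt * (real m + 1)" by (simp add: algebra_simps)
  also have "\<dots> \<le> 2 * T * (real m + 1)" using nd by (intro mult_right_mono) auto
  finally have kd: "real k * dt / (2 * T) \<le> real m + 1" using T by (simp add: divide_le_eq mult.commute)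
  have e1: "q ^ m = exp (real m * ln q)" using q by (simp add: exp_of_nat_mult)
  have e2: "(1 / q) * exp (- (- ln q / (2 * T)) * real k * dt) = exp (- ln q + ln q * (real k * dt / (2 * T)))"
  proof -
    have a: "- (- ln q / (2 * T)) * real k * dt = ln q * (real k * dt / (2 * T))" by (simp add: field_simps)
    have b: "exp (- ln q) = 1 / q" using q by (simp add: exp_minus inverse_eq_divide)
    show ?thesis unfolding a exp_add b ..
  qed
  have "real m * ln q \<le> - ln q + ln q * (real k * dt / (2 * T))"
  proof -
    have "ln q * (real m + 1) \<le> ln q * (real k * dt / (2 * T))"
      using kd lq by (intro mult_left_mono_neg) auto
    then show ?thesis by (simp add: algebra_simps)
  qed
  then show ?thesis unfolding m_def[symmetric] e1 e2 by simp
qed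

theorem theorem4:
  fixes b :: "real^'d::finite \<Rightarrow> real^'d"
    and f :: "real^'d \<Rightarrow> real"
    and K :: "real \<Rightarrow> real^'d \<Rightarrow> (real^'d) measure"
    and T :: real
  assumes "\<forall>j. smooth_torus (\<lambda>x. b x $ j)"
    and "smooth_torus f"
    and "consistent_discretization b f K"
    and "T > 0"
    and "assumption6 K T"
  shows "\<exists>dtss>0.
    (\<forall>dt. 0 < dt \<and> dt \<le> dtss \<longrightarrow> (\<exists>!\<nu>. torus_prob \<nu> \<and> FK_invariant K dt \<nu>)) \<and>
    (\<exists>\<kappa>>0. \<exists>C>0. \<forall>dt. 0 < dt \<and> dt \<le> dtss \<longrightarrow>
       (\<forall>\<nu>. torus_prob \<nu> \<and> FK_invariant K dt \<nu> \<longrightarrow>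
         (\<forall>g \<mu> k. bmeas_torus g \<and> torus_prob \<mu> \<longrightarrow>
            \<bar>Phi K dt k \<mu> g - integral\<^sup>L \<nu> g\<bar> \<le> C * exp (- \<kappa> * real k * dt) * supnorm g)))"
proof -
  have T: "0 < T" by fact
  from assms(5) obtain dtstar \<eta> \<alpha> where ds: "dtstar > 0" and eta: "torus_prob \<eta>"
    and al: "0 < \<alpha>" "\<alpha> < 1"
    and H: "\<And>dt. 0 < dt \<and> dt \<le> dtstar \<Longrightarrow> (\<forall>g. bmeas_torus g \<and> (\<forall>x. 0 \<le> g x) \<longrightarrow> (\<forall>x.
             \<alpha> * integral\<^sup>L \<eta> g \<le> (Qop K dt ^^ nat \<lceil>T / dt\<rceil>) g x \<and>
             (Qop K dt ^^ nat \<lceil>T / dt\<rceil>) g x \<le> integral\<^sup>L \<eta> g / \<alpha>))"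
    unfolding assumption6_def by blast
  from assms(3) have kern: "kernel_torus K" and sfall: "\<And>dt. dt > 0 \<Longrightarrow> strong_feller K dt"
    unfolding consistent_discretization_def by blast+
  define dtss where "dtss = min dtstar T"
  have dtss0: "0 < dtss" unfolding dtss_def using ds T by simp
  have FKi: "FK K dt (nat \<lceil>T / dt\<rceil>) \<alpha> \<eta>" if dt: "0 < dt" "dt \<le> dtss" for dt
  proof
    show "kernel_torus K" by (rule kern)
    show "0 < dt" by (rule dt(1))
    show "strong_feller K dt" by (rule sfall[OF dt(1)])
    show "torus_prob \<eta>" by (rule eta)
    show "0 < \<alpha>" "\<alpha> < 1" by (rule al(1), rule al(2))
    have "0 < T / dt" using T dt by simp
    then show "0 < nat \<lceil>T / dt\<rceil>" by simp
    have dd: "0 < dt \<and> dt \<le> dtstar" using dt unfolding dtss_def by simp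
    show "\<alpha> * integral\<^sup>L \<eta> g \<le> (Qop K dt ^^ nat \<lceil>T / dt\<rceil>) g x"
      if "bmeas_torus g" "\<And>x. 0 \<le> g x" for g x using H[OF dd] that by blast
    show "(Qop K dt ^^ nat \<lceil>T / dt\<rceil>) g x \<le> integral\<^sup>L \<eta> g / \<alpha>"
      if "bmeas_torus g" "\<And>x. 0 \<le> g x" for g x using H[OF dd] that by blast
  qed
  define q where "q = 1 - \<alpha>\<^sup>2"
  have a2: "\<alpha>\<^sup>2 < 1\<^sup>2" by (rule power_strict_mono) (use al in auto)
  have a2': "0 < \<alpha>\<^sup>2" using al by simp
  have q: "0 < q" "q < 1" unfolding q_def using a2 a2' by simp_all
  define \<kappa> where "\<kappa> = - ln q / (2 * T)"
  define C where "C = 2 / q"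
  have "ln q < 0" using q by simp
  then have "ln q / (2 * T) < 0" using T by (intro divide_neg_pos) auto
  then have kp: "0 < \<kappa>" unfolding \<kappa>_def by simp
  have Cp: "0 < C" unfolding C_def using q by simp
  have main: "\<bar>Phi K dt k \<mu> g - integral\<^sup>L \<nu> g\<bar> \<le> C * exp (- \<kappa> * real k * dt) * supnorm g"
    if dt: "0 < dt \<and> dt \<le> dtss" and nu: "torus_prob \<nu> \<and> FK_invariant K dt \<nu>"
        and gm: "bmeas_torus g \<and> torus_prob \<mu>"
    for dt :: real and \<nu> \<mu> :: "(real^'d) measure" and g :: "real^'d \<Rightarrow> real" and k :: nat
  proof -
      interpret FK K dt "nat \<lceil>T / dt\<rceil>" \<alpha> \<eta> using FKi dt by blast
      define n where "n = nat \<lceil>T / dt\<rceil>"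
      have c: "\<bar>Phi K dt k \<mu> g - integral\<^sup>L \<nu> g\<bar> \<le> 2 * supnorm g * q ^ (k div n)"
        unfolding q_def n_def using conv gm nu by blast
      have np: "0 < n" unfolding n_def using npos .
      have "real n = of_int \<lceil>T / dt\<rceil>" unfolding n_def using T dt by simp
      also have "\<dots> \<le> T / dt + 1" by (rule of_int_ceiling_le_add_one)
      finally have "real n * dt \<le> (T / dt + 1) * dt" using dt by (intro mult_right_mono) auto
      also have "\<dots> = T + dt" using dt by (simp add: field_simps)
      also have "\<dots> \<le> 2 * T" using dt unfolding dtss_def by simp
      finally have nd: "real n * dt \<le> 2 * T" .
      have ab: "q ^ (k div n) \<le> (1 / q) * exp (- \<kappa> * real k * dt)"
        unfolding \<kappa>_def by (rule arith_bound[OF q np _ T nd]) (use dt in simp)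
      have S0: "0 \<le> supnorm g" using supnorm_nonneg gm by blast
      have "2 * supnorm g * q ^ (k div n) \<le> 2 * supnorm g * ((1 / q) * exp (- \<kappa> * real k * dt))"
        using ab S0 by (intro mult_left_mono) auto
      also have "\<dots> = C * exp (- \<kappa> * real k * dt) * supnorm g" unfolding C_def by simp
      finally show ?thesis using c by linarith
  qed
  have uniq: "\<exists>!\<nu>. torus_prob \<nu> \<and> FK_invariant K dt \<nu>" if dt: "0 < dt \<and> dt \<le> dtss" for dt
  proof -
    interpret FK K dt "nat \<lceil>T / dt\<rceil>" \<alpha> \<eta> using FKi dt by blast
    show ?thesis using exists_inv inv_unique by blast
  qed
  have A: "\<forall>dt. 0 < dt \<and> dt \<le> dtss \<longrightarrow> (\<exists>!\<nu>. torus_prob \<nu> \<and> FK_invariant K dt \<nu>)"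
    using uniq by blast
  have B: "\<forall>dt. 0 < dt \<and> dt \<le> dtss \<longrightarrow>
       (\<forall>\<nu>. torus_prob \<nu> \<and> FK_invariant K dt \<nu> \<longrightarrow>
         (\<forall>g \<mu> k. bmeas_torus g \<and> torus_prob \<mu> \<longrightarrow>
            \<bar>Phi K dt k \<mu> g - integral\<^sup>L \<nu> g\<bar> \<le> C * exp (- \<kappa> * real k * dt) * supnorm g))"
    using main by blast
  show ?thesis using dtss0 A B kp Cp by blast
qed

end
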